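(* Let $(\Omega,\mathcal{F},\mathbb{P})$ be an atomless probability space, let $Z_t$ be a $\mathbb{R}^D$-valued random vector (risk factors) whose distribution has compact support, and let $V_t$ (value function) and $U_t$ (its approximation) be real-valued functions on $\operatorname{supp}(Z_t)$, with $V_t$ regular enough that $X_t:=V_t(Z_t)^+\in L^\infty$. Let $z_t^1,\dots,z_t^n\in\operatorname{supp}(Z_t)$ be realizations of $Z_t$ and set $\mathbf{x}_t=(V_t(z_t^i)^+)_{i=1}^n$, $\mathbf{y}_t=(U_t(z_t^i)^+)_{i=1}^n$. Then for any law-invariant exposure measure $\rho$ on $\mathcal{M}_{1,c}(\mathbb{R})$, \[ \left|\rho(X_t)-\widehat{\rho}(\mathbf{y}_t)\right|\le \left|\rho(X_t)-\widehat{\rho}(\mathbf{x}_t)\right|+\Vert V_t-U_t\Vert_\infty . \]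
   Context: $x^+=\max\{x,0\}$. An exposure measure is a map $\rho:L^0(\Omega,\mathcal{F},\mathbb{P})\to\mathbb{R}\cup\{\infty\}$ that is monotone ($X_1\le X_2\Rightarrow\rho(X_1)\le\rho(X_2)$) and cash-additive ($\rho(X+c)=\rho(X)+c$ for $c\in\mathbb{R}$). It is law-invariant if $\rho(X)$ depends only on the distribution function $F_X$ of $X$, so one writes $\rho(X)=\rho(F_X)$; $\mathcal{M}_{1,c}(\mathbb{R})$ denotes the compactly supported probability measures on $\mathbb{R}$, and "$\rho$ on $\mathcal{M}_{1,c}(\mathbb{R})$" means $\rho$ regarded as a map on such laws. For a finite sample $\mathbf{x}=(x^i)_{i=1}^n$, the empirical distribution is $F_{\mathbf{x}}(x)=\frac1n\sum_{i=1}^n\mathbb{1}_{\{x\ge x^i\}}$ and the empirical estimator is $\widehat\rho(\mathbf{x})=\rho(F_{\mathbf{x}})$. For a function $f$ on a set $S$, $\Vert f\Vert_\infty=\sup_{s\in S}|f(s)|$ (genuine supremum); here $S=\operatorname{supp}(Z_t)$. *)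

theory Defs
  imports "HOL-Probability.Probability"
begin

definition atomless :: "'a measure \<Rightarrow> bool" where
  "atomless M \<longleftrightarrow> (\<forall>A\<in>sets M. measure M A > 0 \<longrightarrow>
     (\<exists>B\<in>sets M. B \<subseteq> A \<and> 0 < measure M B \<and> measure M B < measure M A))"

definition cdf_of :: "'a measure \<Rightarrow> ('a \<Rightarrow> real) \<Rightarrow> real \<Rightarrow> real" where
  "cdf_of M X = (\<lambda>x. measure M {\<omega> \<in> space M. X \<omega> \<le> x})"

definition empirical_cdf :: "nat \<Rightarrow> (nat \<Rightarrow> real) \<Rightarrow> real \<Rightarrow> real" where
  "empirical_cdf n xs = (\<lambda>x. (\<Sum>i<n. if x \<ge> xs i then 1 else 0) / real n)"

definition supp_law :: "'a measure \<Rightarrow> ('a \<Rightarrow> 'b::metric_space) \<Rightarrow> 'b set" where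
  "supp_law M Z = {z. \<forall>e>0. measure M {\<omega> \<in> space M. Z \<omega> \<in> ball z e} > 0}"

definition compact_law_rv :: "'a measure \<Rightarrow> ('a \<Rightarrow> real) \<Rightarrow> bool" where
  "compact_law_rv M X \<longleftrightarrow> X \<in> borel_measurable M \<and>
     (\<exists>K. compact K \<and> (AE \<omega> in M. X \<omega> \<in> K))"

text \<open>A law-invariant exposure measure on compactly supported laws, given as a
  function rho of distribution functions (rho(X) = rho(F_X)): monotone and
  cash-additive on random variables (with compactly supported laws) over M.\<close>
definition law_invariant_exposure :: "'a measure \<Rightarrow> ((real \<Rightarrow> real) \<Rightarrow> real) \<Rightarrow> bool" where
  "law_invariant_exposure M rho \<longleftrightarrow>
     (\<forall>X1 X2. compact_law_rv M X1 \<longrightarrow> compact_law_rv M X2 \<longrightarrow>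
        (AE \<omega> in M. X1 \<omega> \<le> X2 \<omega>) \<longrightarrow> rho (cdf_of M X1) \<le> rho (cdf_of M X2)) \<and>
     (\<forall>X c. compact_law_rv M X \<longrightarrow>
        rho (cdf_of M (\<lambda>\<omega>. X \<omega> + c)) = rho (cdf_of M X) + c)"

end

theory Submission
  imports Defs
begin

lemma atomlessD:
  assumes "atomless M" "A \<in> sets M" "measure M A > 0"
  shows "\<exists>B\<in>sets M. B \<subseteq> A \<and> 0 < measure M B \<and> measure M B < measure M A"
  using assms unfolding atomless_def by (metis (no_types, lifting))
lemma atomless_small:
  assumes P: "prob_space M" and al: "atomless M" and A: "A \<in> sets M" "measure M A > 0" and e: "e > 0"
  shows "\<exists>C\<in>sets M. C \<subseteq> A \<and> 0 < measure M C \<and> measure M C < e"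
proof -
  interpret prob_space M by (rule P)
  have *: "\<exists>C\<in>sets M. C \<subseteq> A \<and> 0 < measure M C \<and> measure M C \<le> measure M A / 2^k" for k
  proof (induction k)
    case 0 then show ?case using A by auto
  next
    case (Suc k)
    then obtain C where C: "C \<in> sets M" "C \<subseteq> A" "0 < measure M C" "measure M C \<le> measure M A / 2^k" by blast
    have "\<exists>B\<in>sets M. B \<subseteq> C \<and> 0 < measure M B \<and> measure M B < measure M C"
      using atomlessD[OF al C(1,3)] .
    then obtain B where B: "B \<in> sets M" "B \<subseteq> C" "0 < measure M B" "measure M B < measure M C"
      by blast
    show ?case
    proof (cases "measure M B \<le> measure M C / 2")
      case True
      have "measure M B \<le> measure M A / 2 ^ Suc k" using True C(4) by simp
      then show ?thesis using B C by blast
    next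
      case False
      have "measure M (C - B) = measure M C - measure M B" using B C finite_measure_Diff by blast
      then have "measure M (C - B) \<le> measure M A / 2 ^ Suc k" "0 < measure M (C - B)" using False C(4) B(4) by simp_all
      moreover have "C - B \<in> sets M" "C - B \<subseteq> A" using B C by auto
      ultimately show ?thesis by blast
    qed
  qed
  obtain k where k: "measure M A / e < 2 ^ k" using real_arch_pow[of 2 "measure M A / e"] by auto
  then have "measure M A / 2^k < e" using e by (simp add: field_simps)
  moreover obtain C where "C\<in>sets M" "C \<subseteq> A" "0 < measure M C" "measure M C \<le> measure M A / 2^k" using *[of k] by blast
  ultimately show ?thesis by (meson order.strict_trans1)
qed
lemma atomless_value:
  assumes P: "prob_space M" and al: "atomless M" and A: "A \<in> sets M" and t: "0 \<le> t" "t \<le> measure M A"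
  shows "\<exists>B\<in>sets M. B \<subseteq> A \<and> measure M B = t"
proof -
  interpret prob_space M by (rule P)
  define Q where "Q B C \<longleftrightarrow> C \<in> sets M \<and> C \<subseteq> A - B \<and> measure M C \<le> t - measure M B" for B C
  define s where "s B = Sup (measure M ` {C. Q B C})" for B
  define I where "I B \<longleftrightarrow> B \<in> sets M \<and> B \<subseteq> A \<and> measure M B \<le> t" for B
  have bdd: "bdd_above (measure M ` {C. Q B C})" for B
    by (rule bdd_aboveI[of _ 1]) auto
  have Qs: "measure M C \<le> s B" if "Q B C" for B C
    unfolding s_def by (rule cSup_upper) (use that bdd in auto)
  have ex: "\<exists>C. Q B C \<and> s B \<le> 2 * measure M C" if "I B" for B
  proof -
    have Q0: "Q B {}" using that by (auto simp: Q_def I_def)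
    then have s0: "0 \<le> s B" using Qs[OF Q0] by simp
    show ?thesis
    proof (cases "s B = 0")
      case True then show ?thesis using Q0 by auto
    next
      case False
      then have "s B / 2 < s B" using s0 by simp
      then obtain x where x: "x \<in> measure M ` {C. Q B C}" "s B / 2 < x"
        unfolding s_def using less_cSupD[of "measure M ` {C. Q B C}"] Q0 by blast
      then show ?thesis by force
    qed
  qed
  define C where "C B = (SOME C. Q B C \<and> s B \<le> 2 * measure M C)" for B
  define step where "step B = B \<union> C B" for B
  have CI: "Q B (C B) \<and> s B \<le> 2 * measure M (C B)" if "I B" for B
    unfolding C_def using someI_ex[OF ex[OF that]] .
  have stepI: "I (step B) \<and> measure M (step B) = measure M B + measure M (C B)" if "I B" for B
  proof -
    have q: "Q B (C B)" using CI[OF that] by blast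
    have B: "B \<in> sets M" "B \<subseteq> A" "measure M B \<le> t" using that by (auto simp: I_def)
    have c: "C B \<in> sets M" "C B \<subseteq> A - B" "measure M (C B) \<le> t - measure M B" using q by (auto simp: Q_def)
    have eq: "measure M (step B) = measure M B + measure M (C B)"
      unfolding step_def by (rule finite_measure_Union) (use B c in auto)
    show ?thesis using eq B c unfolding I_def step_def by auto
  qed
  define Bs where "Bs k = (step ^^ k) {}" for k
  have BsS: "Bs (Suc k) = step (Bs k)" for k by (simp add: Bs_def)
  have IBs: "I (Bs k)" for k
  proof (induction k)
    case 0 then show ?case using t by (simp add: I_def Bs_def)
  next
    case (Suc k) then show ?case using stepI BsS by metis
  qed
  have inc: "incseq Bs"
    by (rule incseq_SucI) (simp add: BsS step_def)
  define Bu where "Bu = (\<Union>k. Bs k)"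
  have BsE: "Bs k \<in> sets M" "Bs k \<subseteq> A" "measure M (Bs k) \<le> t" for k using IBs[of k] by (auto simp: I_def)
  have lim: "(\<lambda>k. measure M (Bs k)) \<longlonglongrightarrow> measure M Bu"
    unfolding Bu_def by (rule finite_Lim_measure_incseq) (use BsE inc in auto)
  have Un_le: "measure M Bu \<le> t"
    by (rule LIMSEQ_le_const2[OF lim]) (use BsE in auto)
  have UnS: "Bu \<in> sets M" "Bu \<subseteq> A" unfolding Bu_def using BsE by auto
  show ?thesis
  proof (cases "measure M Bu < t")
    case False then show ?thesis using Un_le UnS by (intro bexI[of _ Bu]) auto
  next
    case True
    have "measure M (A - Bu) = measure M A - measure M Bu" using finite_measure_Diff A UnS by blast
    then have pos: "measure M (A - Bu) > 0" using True t by simp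
    obtain D where D: "D \<in> sets M" "D \<subseteq> A - Bu" "0 < measure M D" "measure M D < t - measure M Bu"
      using atomless_small[OF P al _ pos, of "t - measure M Bu"] A UnS True by auto
    have QD: "Q (Bs k) D" for k
    proof -
      have "Bs k \<subseteq> Bu" unfolding Bu_def by auto
      moreover have "measure M (Bs k) \<le> measure M Bu" using \<open>Bs k \<subseteq> Bu\<close> UnS finite_measure_mono by blast
      ultimately show ?thesis using D unfolding Q_def by auto
    qed
    have grow: "real k * measure M D / 2 \<le> measure M (Bs k)" for k
    proof (induction k)
      case 0 then show ?case by (simp add: Bs_def)
    next
      case (Suc k)
      have "measure M D \<le> 2 * measure M (C (Bs k))" using Qs[OF QD[of k]] CI[OF IBs[of k]] by linarith
      moreover have "measure M (Bs (Suc k)) = measure M (Bs k) + measure M (C (Bs k))"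
        using stepI[OF IBs[of k]] BsS by simp
      ultimately show ?case using Suc.IH by (simp add: field_simps)
    qed
    obtain k where k: "t < real k * (measure M D / 2)" using ex_less_of_nat_mult[of "measure M D / 2" t] D by auto
    then show ?thesis using grow[of k] BsE(3)[of k] by simp
  qed
qed
lemma atomless_partition:
  assumes P: "prob_space M" and al: "atomless M" and n: "n \<ge> 1"
  shows "\<exists>f::'a\<Rightarrow>nat. (\<forall>\<omega>. f \<omega> < n) \<and> (\<forall>i<n. {\<omega>\<in>space M. f \<omega> = i} \<in> sets M \<and>
            measure M {\<omega>\<in>space M. f \<omega> = i} = 1 / real n)"
proof -
  interpret prob_space M by (rule P)
  have "\<exists>f::'a\<Rightarrow>nat. (\<forall>\<omega>. f \<omega> \<le> k) \<and> (\<forall>i\<le>k. {\<omega>\<in>space M. f \<omega> = i} \<in> sets M) \<and>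
          (\<forall>i<k. measure M {\<omega>\<in>space M. f \<omega> = i} = 1 / real n) \<and>
          measure M {\<omega>\<in>space M. f \<omega> = k} = 1 - real k / real n" if "k < n" for k
    using that
  proof (induction k)
    case 0
    have "{\<omega>\<in>space M. (\<lambda>_. 0::nat) \<omega> = 0} = space M" by auto
    then show ?case by (intro exI[of _ "\<lambda>_. 0::nat"]) (auto simp: prob_space)
  next
    case (Suc k)
    then obtain f :: "'a \<Rightarrow> nat" where f: "\<forall>\<omega>. f \<omega> \<le> k" "\<forall>i\<le>k. {\<omega>\<in>space M. f \<omega> = i} \<in> sets M"
          "\<forall>i<k. measure M {\<omega>\<in>space M. f \<omega> = i} = 1 / real n"
          "measure M {\<omega>\<in>space M. f \<omega> = k} = 1 - real k / real n" by auto
    define R where "R = {\<omega>\<in>space M. f \<omega> = k}"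
    have R: "R \<in> sets M" "measure M R = 1 - real k / real n" using f by (auto simp: R_def)
    have "real (Suc k) \<le> real n" using Suc.prems by simp
    then have "1 / real n \<le> 1 - real k / real n" using n by (simp add: field_simps)
    then obtain B where B: "B \<in> sets M" "B \<subseteq> R" "measure M B = 1 / real n"
      using atomless_value[OF P al R(1), of "1 / real n"] R(2) by auto
    define g where "g \<omega> = (if \<omega> \<in> R - B then Suc k else f \<omega>)" for \<omega>
    have RS: "R \<subseteq> space M" by (auto simp: R_def)
    have g1: "{\<omega>\<in>space M. g \<omega> = Suc k} = R - B"
    proof -
      have fk: "f x \<noteq> Suc k" for x using f(1) by (metis Suc_n_not_le_n)
      show ?thesis using RS by (auto simp: g_def fk)
    qed
    have g2: "{\<omega>\<in>space M. g \<omega> = i} = {\<omega>\<in>space M. f \<omega> = i}" if "i < k" for i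
      using that by (auto simp: g_def R_def)
    have g3: "{\<omega>\<in>space M. g \<omega> = k} = B"
      using B RS by (auto simp: g_def R_def)
    have mRB: "measure M (R - B) = 1 - real (Suc k) / real n"
      using finite_measure_Diff[OF R(1) B(1) B(2)] R(2) B(3) by (simp add: add_divide_distrib)
    show ?case
    proof (intro exI[of _ g] conjI allI impI)
      show "g \<omega> \<le> Suc k" for \<omega> using f(1) by (auto simp: g_def intro: le_SucI)
      show "{\<omega>\<in>space M. g \<omega> = i} \<in> sets M" if "i \<le> Suc k" for i
      proof -
        have "i < k \<or> i = k \<or> i = Suc k" using that by linarith
        then consider "i < k" | "i = k" | "i = Suc k" by fast
        then show ?thesis
        proof cases
          case 1 then show ?thesis using g2 f(2) by simp
        next
          case 2 then show ?thesis using g3 B(1) by simp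
        next
          case 3 then show ?thesis using g1 B(1) R(1) by (metis sets.Diff)
        qed
      qed
      show "measure M {\<omega>\<in>space M. g \<omega> = i} = 1 / real n" if "i < Suc k" for i
      proof -
        have "i < k \<or> i = k" using that by linarith
        then consider "i < k" | "i = k" by fast
        then show ?thesis
        proof cases
          case 1 then show ?thesis using g2 f(3) by simp
        next
          case 2 then show ?thesis using g3 B(3) by simp
        qed
      qed
      show "measure M {\<omega>\<in>space M. g \<omega> = Suc k} = 1 - real (Suc k) / real n"
        using g1 mRB by simp
    qed
  qed
  from this[of "n - 1"] n obtain f :: "'a \<Rightarrow> nat" where f: "\<forall>\<omega>. f \<omega> \<le> n - 1" "\<forall>i\<le>n - 1. {\<omega>\<in>space M. f \<omega> = i} \<in> sets M"
          "\<forall>i<n - 1. measure M {\<omega>\<in>space M. f \<omega> = i} = 1 / real n"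
          "measure M {\<omega>\<in>space M. f \<omega> = n - 1} = 1 - real (n - 1) / real n" by auto
  have last: "1 - real (n - 1) / real n = 1 / real n" using n by (simp add: field_simps of_nat_diff)
  show ?thesis
  proof (intro exI[of _ f] conjI allI impI)
    show "f \<omega> < n" for \<omega> using f(1) n by (metis One_nat_def Suc_pred le_imp_less_Suc less_le_trans order_refl)
    show "{\<omega>\<in>space M. f \<omega> = i} \<in> sets M" if "i < n" for i using f(2) that by auto
    show "measure M {\<omega>\<in>space M. f \<omega> = i} = 1 / real n" if "i < n" for i
    proof (cases "i = n - 1")
      case True then show ?thesis using f(4) last by simp
    next
      case False then show ?thesis using f(3) that by auto
    qed
  qed
qed
lemma realize:
  assumes P: "prob_space M" and f: "\<forall>\<omega>. f \<omega> < n"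
    and fi: "\<forall>i<n. {\<omega>\<in>space M. f \<omega> = i} \<in> sets M \<and> measure M {\<omega>\<in>space M. f \<omega> = i} = 1 / real n"
  shows "cdf_of M (\<lambda>\<omega>. xs (f \<omega>)) = empirical_cdf n xs" and "compact_law_rv M (\<lambda>\<omega>. xs (f \<omega>))"
proof -
  interpret prob_space M by (rule P)
  show "cdf_of M (\<lambda>\<omega>. xs (f \<omega>)) = empirical_cdf n xs"
  proof
    fix x
    define S where "S = {i\<in>{..<n}. xs i \<le> x}"
    have eq: "{\<omega>\<in>space M. xs (f \<omega>) \<le> x} = (\<Union>i\<in>S. {\<omega>\<in>space M. f \<omega> = i})"
      using f by (auto simp: S_def)
    have "measure M (\<Union>i\<in>S. {\<omega>\<in>space M. f \<omega> = i}) = (\<Sum>i\<in>S. measure M {\<omega>\<in>space M. f \<omega> = i})"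
      by (rule finite_measure_finite_Union) (use fi in \<open>auto simp: S_def disjoint_family_on_def\<close>)
    also have "\<dots> = (\<Sum>i\<in>S. 1 / real n)" using fi by (intro sum.cong) (auto simp: S_def)
    also have "\<dots> = (\<Sum>i\<in>S. 1) / real n" by (rule sum_divide_distrib[symmetric])
    also have "(\<Sum>i\<in>S. 1) = (\<Sum>i<n. if x \<ge> xs i then 1 else 0 :: real)"
      unfolding S_def by (rule sum.inter_filter) simp
    finally show "cdf_of M (\<lambda>\<omega>. xs (f \<omega>)) x = empirical_cdf n xs x"
      unfolding cdf_of_def empirical_cdf_def eq .
  qed
  have fm: "f \<in> measurable M (count_space UNIV)"
    unfolding measurable_count_space_eq2_countable
  proof (intro conjI ballI)
    show "f \<in> space M \<rightarrow> UNIV" by simp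
    fix a :: nat
    show "f -` {a} \<inter> space M \<in> sets M"
    proof (cases "a < n")
      case True
      have "f -` {a} \<inter> space M = {\<omega>\<in>space M. f \<omega> = a}" by auto
      then show ?thesis using fi True by simp
    next
      case False
      then have "f -` {a} \<inter> space M = {}" using f by auto
      then show ?thesis by simp
    qed
  qed
  have "(\<lambda>\<omega>. xs (f \<omega>)) \<in> borel_measurable M"
    using measurable_compose[OF fm, of xs borel] by (simp add: o_def)
  moreover have "compact (xs ` {..<n})" by (rule finite_imp_compact) simp
  moreover have "AE \<omega> in M. xs (f \<omega>) \<in> xs ` {..<n}" using f by (intro AE_I2) auto
  ultimately show "compact_law_rv M (\<lambda>\<omega>. xs (f \<omega>))" unfolding compact_law_rv_def by blast
qed
theorem proposition1p1:
  fixes M :: "'a measure" and Z :: "'a \<Rightarrow> 'b::euclidean_space"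
    and V U :: "'b \<Rightarrow> real" and z :: "nat \<Rightarrow> 'b" and n :: nat
    and rho :: "(real \<Rightarrow> real) \<Rightarrow> real"
  assumes "prob_space M" and "atomless M"
    and "Z \<in> borel_measurable M"
    and "compact (supp_law M Z)"
    and "(\<lambda>\<omega>. max (V (Z \<omega>)) 0) \<in> borel_measurable M"
    and "\<exists>C. AE \<omega> in M. \<bar>max (V (Z \<omega>)) 0\<bar> \<le> C"
    and "n \<ge> 1"
    and "\<forall>i<n. z i \<in> supp_law M Z"
    and "law_invariant_exposure M rho"
  shows "ereal \<bar>rho (cdf_of M (\<lambda>\<omega>. max (V (Z \<omega>)) 0))
                  - rho (empirical_cdf n (\<lambda>i. max (U (z i)) 0))\<bar>
         \<le> ereal \<bar>rho (cdf_of M (\<lambda>\<omega>. max (V (Z \<omega>)) 0))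
                  - rho (empirical_cdf n (\<lambda>i. max (V (z i)) 0))\<bar>
           + (SUP s \<in> supp_law M Z. ereal \<bar>V s - U s\<bar>)"
proof -
  interpret prob_space M by (rule assms(1))
  obtain f :: "'a \<Rightarrow> nat" where f: "\<forall>\<omega>. f \<omega> < n"
    and fi: "\<forall>i<n. {\<omega>\<in>space M. f \<omega> = i} \<in> sets M \<and> measure M {\<omega>\<in>space M. f \<omega> = i} = 1 / real n"
    using atomless_partition[OF assms(1,2,7)] by blast
  note R1 = realize(1)[OF assms(1) f fi] and R2 = realize(2)[OF assms(1) f fi]
  define xv where "xv i = max (V (z i)) 0" for i
  define yv where "yv i = max (U (z i)) 0" for i
  define a where "a = rho (cdf_of M (\<lambda>\<omega>. max (V (Z \<omega>)) 0))"
  define S where "S = (SUP s \<in> supp_law M Z. ereal \<bar>V s - U s\<bar>)"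
  have mono: "rho (cdf_of M X1) \<le> rho (cdf_of M X2)"
    if "compact_law_rv M X1" "compact_law_rv M X2" "\<forall>\<omega>. X1 \<omega> \<le> X2 \<omega>" for X1 X2
    using assms(9) that unfolding law_invariant_exposure_def by (meson AE_I2)
  have cash: "rho (cdf_of M (\<lambda>\<omega>. X \<omega> + c)) = rho (cdf_of M X) + c" if "compact_law_rv M X" for X c
    using assms(9) that unfolding law_invariant_exposure_def by blast
  show ?thesis
  proof (cases "S = \<infinity>")
    case True
    then show ?thesis unfolding S_def[symmetric] by simp
  next
    case False
    have z0: "z 0 \<in> supp_law M Z" using assms(7,8) by simp
    have upper: "ereal \<bar>V s - U s\<bar> \<le> S" if "s \<in> supp_law M Z" for s
      unfolding S_def using that by (rule SUP_upper)
    have "S \<noteq> - \<infinity>" using upper[OF z0] by auto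
    then obtain d where d: "S = ereal d" using False by (cases S) auto
    have dd: "\<bar>xv i - yv i\<bar> \<le> d" if "i < n" for i
    proof -
      have "\<bar>V (z i) - U (z i)\<bar> \<le> d" using upper[of "z i"] assms(8) that d by simp
      then show ?thesis unfolding xv_def yv_def by linarith
    qed
    have pw: "\<bar>xv (f \<omega>) - yv (f \<omega>)\<bar> \<le> d" for \<omega> using dd f by blast
    have pw1: "yv (f \<omega>) \<le> xv (f \<omega>) + d" and pw2: "xv (f \<omega>) \<le> yv (f \<omega>) + d" for \<omega>
      using pw[of \<omega>] by linarith+
    have c1: "rho (empirical_cdf n yv) \<le> rho (empirical_cdf n xv) + d"
    proof -
      have "rho (cdf_of M (\<lambda>\<omega>. yv (f \<omega>))) \<le> rho (cdf_of M (\<lambda>\<omega>. xv (f \<omega>) + d))"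
        using R2[of yv] R2[of "\<lambda>i. xv i + d"] pw1 by (intro mono) auto
      also have "\<dots> = rho (cdf_of M (\<lambda>\<omega>. xv (f \<omega>))) + d" using cash R2 by blast
      finally show ?thesis unfolding R1 .
    qed
    have c2: "rho (empirical_cdf n xv) \<le> rho (empirical_cdf n yv) + d"
    proof -
      have "rho (cdf_of M (\<lambda>\<omega>. xv (f \<omega>))) \<le> rho (cdf_of M (\<lambda>\<omega>. yv (f \<omega>) + d))"
        using R2[of xv] R2[of "\<lambda>i. yv i + d"] pw2 by (intro mono) auto
      also have "\<dots> = rho (cdf_of M (\<lambda>\<omega>. yv (f \<omega>))) + d" using cash R2 by blast
      finally show ?thesis unfolding R1 .
    qed
    have "\<bar>a - rho (empirical_cdf n yv)\<bar> \<le> \<bar>a - rho (empirical_cdf n xv)\<bar> + d"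
      using c1 c2 by linarith
    then show ?thesis unfolding S_def[symmetric] d a_def[symmetric] xv_def[symmetric] yv_def[symmetric]
      by simp
  qed
qed

end
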